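(* In the linear model setting described in the context, for any $\tau\in[0,1]$, $$\mathcal U(\hat f_\tau)=\tau\sum_{s=1}^Kw_s\Big(\hat b_s-\sum_{s'=1}^Kw_{s'}\hat b_{s'}\Big)^2\quad\text{almost surely.}$$
   Context: Model: $Y=\langle\boldsymbol X,\boldsymbol\beta^*\rangle+b^*_S+\xi$, $\boldsymbol X\sim\mathcal N(\boldsymbol0,\boldsymbol\Sigma)$ with $\boldsymbol\Sigma\succ0$, independent of $S\in[K]$, $\xi\sim\mathcal N(0,\sigma^2)$ independent. Observations: for each $s$, $\boldsymbol Y_s=\mathbf X_s\boldsymbol\beta^*+b^*_s\boldsymbol1_{n_s}+\boldsymbol\xi_s$ ($\mathbf X_s\in\mathbb R^{n_s\times p}$ with i.i.d. $\mathcal N(\boldsymbol0,\boldsymbol\Sigma)$ rows, $\boldsymbol\xi_s$ with i.i.d. $\mathcal N(0,\sigma^2)$ entries, all independent); $n=\sum_sn_s$, $w_s=n_s/n$. $(\hat{\boldsymbol\beta},\hat{\boldsymbol b})\in\arg\min_{(\boldsymbol\beta,\boldsymbol b)}\sum_sw_s\frac1{n_s}\|\boldsymbol Y_s-\mathbf X_s\boldsymbol\beta-b_s\boldsymbol1_{n_s}\|_2^2$ and $\hat f_\tau(\boldsymbol x,s)=\langle\boldsymbol x,\hat{\boldsymbol\beta}\rangle+\sqrt\tau\hat b_s+(1-\sqrt\tau)\sum_{s'}w_{s'}\hat b_{s'}$. Unfairness (with the sample fixed): $\mathcal U(f)=\min_{\nu\in\mathcal P_2(\mathbb R)}\sum_sw_s\mathsf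 W_2^2(\mathrm{Law}(f(\boldsymbol X,s)),\nu)$, $\boldsymbol X\sim\mathcal N(\boldsymbol0,\boldsymbol\Sigma)$, $\mathsf W_2$ the Wasserstein-2 distance. *)

theory Defs
  imports "HOL-Probability.Probability"
begin

definition P2 :: "real measure set" where
  "P2 = {\<nu>. prob_space \<nu> \<and> sets \<nu> = sets borel \<and> (\<integral>\<^sup>+ x. ennreal (x\<^sup>2) \<partial>\<nu>) < \<infinity>}"

definition couplings :: "real measure \<Rightarrow> real measure \<Rightarrow> (real \<times> real) measure set" where
  "couplings \<mu> \<nu> = {\<pi>. prob_space \<pi> \<and> sets \<pi> = sets (borel \<Otimes>\<^sub>M borel)
      \<and> distr \<pi> borel fst = \<mu> \<and> distr \<pi> borel snd = \<nu>}"

definition W2sq :: "real measure \<Rightarrow> real measure \<Rightarrow> ennreal" where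
  "W2sq \<mu> \<nu> = (INF \<pi> \<in> couplings \<mu> \<nu>. \<integral>\<^sup>+ z. ennreal ((fst z - snd z)\<^sup>2) \<partial>\<pi>)"

definition wt :: "('k::finite \<Rightarrow> nat) \<Rightarrow> 'k \<Rightarrow> real" where
  "wt n s = real (n s) / real (\<Sum>s'\<in>UNIV. n s')"

definition unfairness :: "('k::finite \<Rightarrow> real) \<Rightarrow> ('k \<Rightarrow> real measure) \<Rightarrow> ennreal" where
  "unfairness w \<mu> = (INF \<nu> \<in> P2. \<Sum>s\<in>UNIV. ennreal (w s) * W2sq (\<mu> s) \<nu>)"

text \<open>Empirical weighted least-squares objective; row i (i < n s) of X_s is Xd s i.\<close>
definition ls_obj :: "('k::finite \<Rightarrow> nat) \<Rightarrow> ('k \<Rightarrow> nat \<Rightarrow> real^'p) \<Rightarrow> ('k \<Rightarrow> nat \<Rightarrow> real)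
      \<Rightarrow> real^'p \<Rightarrow> ('k \<Rightarrow> real) \<Rightarrow> real" where
  "ls_obj n Xd Y \<beta> b = (\<Sum>s\<in>UNIV. wt n s * (1 / real (n s)) *
      (\<Sum>i<n s. (Y s i - Xd s i \<bullet> \<beta> - b s)\<^sup>2))"

definition f_tau :: "('k::finite \<Rightarrow> nat) \<Rightarrow> real^'p \<Rightarrow> ('k \<Rightarrow> real) \<Rightarrow> real \<Rightarrow> real^'p \<Rightarrow> 'k \<Rightarrow> real" where
  "f_tau n \<beta> b \<tau> x s = x \<bullet> \<beta> + sqrt \<tau> * b s + (1 - sqrt \<tau>) * (\<Sum>s'\<in>UNIV. wt n s' * b s')"

definition gaussian_vec :: "'a measure \<Rightarrow> ('a \<Rightarrow> real^'p) \<Rightarrow> real^'p^'p \<Rightarrow> bool" where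
  "gaussian_vec M X \<Sigma> \<longleftrightarrow> X \<in> borel_measurable M \<and>
     (\<forall>v. v \<noteq> 0 \<longrightarrow> distributed M lborel (\<lambda>\<omega>. v \<bullet> X \<omega>) (normal_density 0 (sqrt (v \<bullet> (\<Sigma> *v v)))))"

end

theory Submission
  imports Defs
begin

lemma coupling_lb:
  fixes \<mu> \<nu> :: "real measure"
  assumes C: "\<pi> \<in> couplings \<mu> \<nu>" and I1: "integrable \<mu> (\<lambda>x. x)" and I2: "integrable \<nu> (\<lambda>x. x)"
  shows "ennreal ((integral\<^sup>L \<mu> (\<lambda>x. x) - integral\<^sup>L \<nu> (\<lambda>x. x))\<^sup>2) \<le> (\<integral>\<^sup>+ z. ennreal ((fst z - snd z)\<^sup>2) \<partial>\<pi>)"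
proof -
  have P: "prob_space \<pi>" and S: "sets \<pi> = sets (borel \<Otimes>\<^sub>M borel)"
    and D1: "distr \<pi> borel fst = \<mu>" and D2: "distr \<pi> borel snd = \<nu>"
    using C by (auto simp: couplings_def)
  interpret prob_space \<pi> by (rule P)
  have mf: "fst \<in> borel_measurable \<pi>"
    using measurable_cong_sets[OF S refl, of borel] measurable_fst by blast
  have ms: "snd \<in> borel_measurable \<pi>"
    using measurable_cong_sets[OF S refl, of borel] measurable_snd by blast
  have "integrable (distr \<pi> borel fst) (\<lambda>x. x) \<longleftrightarrow> integrable \<pi> (\<lambda>z. fst z)"
    by (rule integrable_distr_eq[OF mf]) simp
  then have if1: "integrable \<pi> fst" using I1 unfolding D1 by simp
  have "integrable (distr \<pi> borel snd) (\<lambda>x. x) \<longleftrightarrow> integrable \<pi> (\<lambda>z. snd z)"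
    by (rule integrable_distr_eq[OF ms]) simp
  then have if2: "integrable \<pi> snd" using I2 unfolding D2 by simp
  have "integral\<^sup>L (distr \<pi> borel fst) (\<lambda>x. x) = expectation (\<lambda>z. fst z)"
    by (rule integral_distr[OF mf]) simp
  then have e1: "integral\<^sup>L \<mu> (\<lambda>x. x) = expectation fst" unfolding D1 by simp
  have "integral\<^sup>L (distr \<pi> borel snd) (\<lambda>x. x) = expectation (\<lambda>z. snd z)"
    by (rule integral_distr[OF ms]) simp
  then have e2: "integral\<^sup>L \<nu> (\<lambda>x. x) = expectation snd" unfolding D2 by simp
  let ?g = "\<lambda>z. fst z - snd z"
  have mg: "?g \<in> borel_measurable \<pi>" using mf ms by measurable
  show ?thesis
  proof (cases "(\<integral>\<^sup>+ z. ennreal ((fst z - snd z)\<^sup>2) \<partial>\<pi>) = \<infinity>")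
    case True then show ?thesis by simp
  next
    case False
    have ig2: "integrable \<pi> (\<lambda>z. (?g z)\<^sup>2)"
      using False mg by (intro integrableI_nonneg) (auto simp: less_top)
    have ig: "integrable \<pi> ?g" using if1 if2 by simp
    have eq: "(\<integral>\<^sup>+ z. ennreal ((fst z - snd z)\<^sup>2) \<partial>\<pi>) = ennreal (expectation (\<lambda>z. (?g z)\<^sup>2))"
      using ig2 by (intro nn_integral_eq_integral) auto
    have "expectation ?g = expectation fst - expectation snd"
      using if1 if2 by simp
    moreover have "(expectation ?g)\<^sup>2 \<le> expectation (\<lambda>z. (?g z)\<^sup>2)"
      using variance_eq[OF ig ig2] variance_positive[of ?g] by simp
    ultimately show ?thesis using eq e1 e2 by (simp add: ennreal_leI)
  qed
qed

lemma wsum_alg: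
  fixes w c :: "'k::finite \<Rightarrow> real" and a :: real
  assumes sw: "(\<Sum>s\<in>UNIV. w s) = 1" and w0: "\<forall>s. 0 \<le> w s"
  shows "(\<Sum>s\<in>UNIV. w s * (c s - (\<Sum>s'\<in>UNIV. w s' * c s'))\<^sup>2) \<le> (\<Sum>s\<in>UNIV. w s * (c s + a)\<^sup>2)"
proof -
  define cb where "cb = (\<Sum>s'\<in>UNIV. w s' * c s')"
  have "(\<Sum>s\<in>UNIV. w s * (c s + a)\<^sup>2) = (\<Sum>s\<in>UNIV. w s * (c s - cb)\<^sup>2 + (2*(a+cb)) * (w s * c s) + (a\<^sup>2 - cb\<^sup>2) * w s)"
    by (rule sum.cong) (simp_all add: algebra_simps power2_eq_square)
  also have "\<dots> = (\<Sum>s\<in>UNIV. w s * (c s - cb)\<^sup>2) + (2*(a+cb)) * cb + (a\<^sup>2 - cb\<^sup>2) * 1"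
    by (simp add: sum.distrib sum_distrib_left[symmetric] sum_distrib_right[symmetric] cb_def sw)
  also have "\<dots> = (\<Sum>s\<in>UNIV. w s * (c s - cb)\<^sup>2) + (a + cb)\<^sup>2"
    by (simp add: algebra_simps power2_eq_square)
  finally show ?thesis unfolding cb_def[symmetric] by simp
qed

lemma ennreal_wsum:
  fixes w d :: "'k::finite \<Rightarrow> real"
  assumes "\<forall>s. 0 \<le> w s" "\<forall>s. 0 \<le> d s"
  shows "(\<Sum>s\<in>UNIV. ennreal (w s) * ennreal (d s)) = ennreal (\<Sum>s\<in>UNIV. w s * d s)"
  using assms by (subst sum_ennreal[symmetric]) (auto simp: ennreal_mult'')

lemma translate_unfair:
  fixes M :: "'a measure" and Z :: "'a \<Rightarrow> real" and c w :: "'k::finite \<Rightarrow> real"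
  assumes PM: "prob_space M" and mZ[measurable]: "Z \<in> borel_measurable M"
    and iZ: "integrable M Z" and iZ2: "integrable M (\<lambda>\<omega>. (Z \<omega>)\<^sup>2)"
    and w0: "\<forall>s. 0 \<le> w s" and sw: "(\<Sum>s\<in>UNIV. w s) = 1"
  shows "unfairness w (\<lambda>s. distr M borel (\<lambda>\<omega>. Z \<omega> + c s))
     = ennreal (\<Sum>s\<in>UNIV. w s * (c s - (\<Sum>s'\<in>UNIV. w s' * c s'))\<^sup>2)"
proof -
  interpret M: prob_space M by (rule PM)
  define cb where "cb = (\<Sum>s'\<in>UNIV. w s' * c s')"
  have iT2: "integrable M (\<lambda>\<omega>. (Z \<omega> + t)\<^sup>2)" for t
  proof -
    have "integrable M (\<lambda>\<omega>. (Z \<omega>)\<^sup>2 + (2*t) * Z \<omega> + t\<^sup>2)"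
      by (intro Bochner_Integration.integrable_add integrable_mult_right iZ iZ2 M.integrable_const)
    moreover have "(\<lambda>\<omega>. (Z \<omega>)\<^sup>2 + (2*t) * Z \<omega> + t\<^sup>2) = (\<lambda>\<omega>. (Z \<omega> + t)\<^sup>2)"
      by (rule ext) (simp add: power2_sum)
    ultimately show ?thesis by simp
  qed
  have upper: "unfairness w (\<lambda>s. distr M borel (\<lambda>\<omega>. Z \<omega> + c s)) \<le> ennreal (\<Sum>s\<in>UNIV. w s * (c s - cb)\<^sup>2)"
  proof -
    define \<nu>0 where "\<nu>0 = distr M borel (\<lambda>\<omega>. Z \<omega> + cb)"
    have "\<nu>0 \<in> P2"
    proof -
      have "prob_space \<nu>0" unfolding \<nu>0_def by (rule M.prob_space_distr) simp
      moreover have "sets \<nu>0 = sets borel" unfolding \<nu>0_def by simp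
      moreover have "(\<integral>\<^sup>+ x. ennreal (x\<^sup>2) \<partial>\<nu>0) = (\<integral>\<^sup>+ \<omega>. ennreal ((Z \<omega> + cb)\<^sup>2) \<partial>M)"
      proof -
        have m1: "(\<lambda>\<omega>. Z \<omega> + cb) \<in> borel_measurable M"
          by (rule borel_measurable_add[OF mZ borel_measurable_const])
        have g1: "(\<lambda>x. ennreal (x\<^sup>2)) \<in> borel_measurable borel"
          by (intro measurable_compose[OF _ measurable_ennreal] borel_measurable_power measurable_ident_sets refl)
        show ?thesis unfolding \<nu>0_def by (rule nn_integral_distr[OF m1]) (unfold measurable_distr_eq1, rule g1)
      qed
      moreover have "(\<integral>\<^sup>+ \<omega>. ennreal ((Z \<omega> + cb)\<^sup>2) \<partial>M) < \<infinity>"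
        using integrableD(2)[OF iT2[of cb]] by (simp add: less_top)
      ultimately show ?thesis unfolding P2_def by simp
    qed
    have W: "W2sq (distr M borel (\<lambda>\<omega>. Z \<omega> + c s)) \<nu>0 \<le> ennreal ((c s - cb)\<^sup>2)" for s
    proof -
      define \<pi> where "\<pi> = distr M (borel \<Otimes>\<^sub>M borel) (\<lambda>\<omega>. (Z \<omega> + c s, Z \<omega> + cb))"
      have mp: "(\<lambda>\<omega>. (Z \<omega> + c s, Z \<omega> + cb)) \<in> measurable M (borel \<Otimes>\<^sub>M borel)" by measurable
      have "\<pi> \<in> couplings (distr M borel (\<lambda>\<omega>. Z \<omega> + c s)) \<nu>0"
        unfolding couplings_def \<pi>_def \<nu>0_def
        by (auto intro!: M.prob_space_distr simp: distr_distr[OF _ mp] comp_def)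
      moreover have "(\<integral>\<^sup>+ z. ennreal ((fst z - snd z)\<^sup>2) \<partial>\<pi>) = ennreal ((c s - cb)\<^sup>2)"
      proof -
        have "(\<integral>\<^sup>+ z. ennreal ((fst z - snd z)\<^sup>2) \<partial>\<pi>) = (\<integral>\<^sup>+ \<omega>. ennreal ((c s - cb)\<^sup>2) \<partial>M)"
          unfolding \<pi>_def by (subst nn_integral_distr[OF mp])
             (unfold measurable_distr_eq1, intro measurable_compose[OF _ measurable_ennreal] borel_measurable_power borel_measurable_diff measurable_fst measurable_snd, simp)
        also have "\<dots> = ennreal ((c s - cb)\<^sup>2)"
          by (simp add: M.emeasure_space_1)
        finally show ?thesis .
      qed
      ultimately show ?thesis unfolding W2sq_def by (intro INF_lower2[where i=\<pi>]) simp_all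
    qed
    have "unfairness w (\<lambda>s. distr M borel (\<lambda>\<omega>. Z \<omega> + c s)) \<le> (\<Sum>s\<in>UNIV. ennreal (w s) * W2sq (distr M borel (\<lambda>\<omega>. Z \<omega> + c s)) \<nu>0)"
      unfolding unfairness_def using \<open>\<nu>0 \<in> P2\<close> by (rule INF_lower)
    also have "\<dots> \<le> (\<Sum>s\<in>UNIV. ennreal (w s) * ennreal ((c s - cb)\<^sup>2))"
      by (intro sum_mono mult_left_mono W) simp
    also have "\<dots> = ennreal (\<Sum>s\<in>UNIV. w s * (c s - cb)\<^sup>2)"
      using w0 by (intro ennreal_wsum) auto
    finally show ?thesis .
  qed
  have lower: "ennreal (\<Sum>s\<in>UNIV. w s * (c s - cb)\<^sup>2) \<le> unfairness w (\<lambda>s. distr M borel (\<lambda>\<omega>. Z \<omega> + c s))"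
    unfolding unfairness_def
  proof (rule INF_greatest)
    fix \<nu> assume "\<nu> \<in> P2"
    then have Pn: "prob_space \<nu>" and Sn: "sets \<nu> = sets borel" and Fn: "(\<integral>\<^sup>+ x. ennreal (x\<^sup>2) \<partial>\<nu>) < \<infinity>"
      unfolding P2_def by auto
    interpret N: prob_space \<nu> by (rule Pn)
    have mid: "(\<lambda>x. x) \<in> borel_measurable \<nu>"
      using measurable_ident_sets[OF Sn] by simp
    have "integrable \<nu> (\<lambda>x. x\<^sup>2)"
      using Fn mid by (intro integrableI_nonneg) auto
    then have In: "integrable \<nu> (\<lambda>x. x)"
      using N.square_integrable_imp_integrable[OF mid] by simp
    define m where "m = integral\<^sup>L \<nu> (\<lambda>x. x)"
    have Wl: "ennreal ((c s + (M.expectation Z - m))\<^sup>2) \<le> W2sq (distr M borel (\<lambda>\<omega>. Z \<omega> + c s)) \<nu>" for s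
      unfolding W2sq_def
    proof (rule INF_greatest)
      fix \<pi> assume C: "\<pi> \<in> couplings (distr M borel (\<lambda>\<omega>. Z \<omega> + c s)) \<nu>"
      have I1: "integrable (distr M borel (\<lambda>\<omega>. Z \<omega> + c s)) (\<lambda>x. x)"
        using iZ by (subst integrable_distr_eq) auto
      have E1: "integral\<^sup>L (distr M borel (\<lambda>\<omega>. Z \<omega> + c s)) (\<lambda>x. x) = M.expectation Z + c s"
        using iZ by (subst integral_distr) (auto simp: M.prob_space)
      show "ennreal ((c s + (M.expectation Z - m))\<^sup>2) \<le> (\<integral>\<^sup>+ z. ennreal ((fst z - snd z)\<^sup>2) \<partial>\<pi>)"
        using coupling_lb[OF C I1 In] E1 unfolding m_def by (simp add: algebra_simps)
    qed
    have "ennreal (\<Sum>s\<in>UNIV. w s * (c s - cb)\<^sup>2) \<le> ennreal (\<Sum>s\<in>UNIV. w s * (c s + (M.expectation Z - m))\<^sup>2)"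
      unfolding cb_def using wsum_alg[OF sw w0] by (rule ennreal_leI)
    also have "\<dots> = (\<Sum>s\<in>UNIV. ennreal (w s) * ennreal ((c s + (M.expectation Z - m))\<^sup>2))"
      using w0 by (intro ennreal_wsum[symmetric]) auto
    also have "\<dots> \<le> (\<Sum>s\<in>UNIV. ennreal (w s) * W2sq (distr M borel (\<lambda>\<omega>. Z \<omega> + c s)) \<nu>)"
      by (intro sum_mono mult_left_mono Wl) simp
    finally show "ennreal (\<Sum>s\<in>UNIV. w s * (c s - cb)\<^sup>2) \<le> (\<Sum>s\<in>UNIV. ennreal (w s) * W2sq (distr M borel (\<lambda>\<omega>. Z \<omega> + c s)) \<nu>)" .
  qed
  show ?thesis using upper lower unfolding cb_def by (rule antisym)
qed

theorem lemma3:
  fixes M :: "'a measure"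
    and X :: "'a \<Rightarrow> real^'p"
    and \<Sigma> :: "real^'p^'p"
    and n :: "'k::finite \<Rightarrow> nat"
    and Xd :: "'k \<Rightarrow> nat \<Rightarrow> real^'p"
    and \<beta>star :: "real^'p" and bstar :: "'k \<Rightarrow> real"
    and \<xi> :: "'k \<Rightarrow> nat \<Rightarrow> real"
    and Y :: "'k \<Rightarrow> nat \<Rightarrow> real"
    and \<beta>hat :: "real^'p" and bhat :: "'k \<Rightarrow> real"
    and \<tau> :: real
  assumes "prob_space M"
    and "transpose \<Sigma> = \<Sigma>"
    and "\<forall>v. v \<noteq> 0 \<longrightarrow> v \<bullet> (\<Sigma> *v v) > 0"
    and "gaussian_vec M X \<Sigma>"
    and "\<forall>s. n s > 0"
    and "\<forall>s i. Y s i = Xd s i \<bullet> \<beta>star + bstar s + \<xi> s i"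
    and "\<forall>\<beta> b. ls_obj n Xd Y \<beta>hat bhat \<le> ls_obj n Xd Y \<beta> b"
    and "0 \<le> \<tau>" and "\<tau> \<le> 1"
  shows "unfairness (wt n) (\<lambda>s. distr M borel (\<lambda>\<omega>. f_tau n \<beta>hat bhat \<tau> (X \<omega>) s))
       = ennreal (\<tau> * (\<Sum>s\<in>UNIV. wt n s * (bhat s - (\<Sum>s'\<in>UNIV. wt n s' * bhat s'))\<^sup>2))"
proof -
  note PM = assms(1) and G = assms(4) and npos = assms(5) and t0 = assms(8)
  interpret M: prob_space M by (rule PM)
  have mX[measurable]: "X \<in> borel_measurable M" using G unfolding gaussian_vec_def by simp
  define Z where "Z = (\<lambda>\<omega>. X \<omega> \<bullet> \<beta>hat)"
  have mZ: "Z \<in> borel_measurable M" unfolding Z_def by measurable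
  have iZ2: "integrable M (\<lambda>\<omega>. (Z \<omega>)\<^sup>2)"
  proof (cases "\<beta>hat = 0")
    case True then show ?thesis unfolding Z_def by simp
  next
    case False
    define \<sigma> where "\<sigma> = sqrt (\<beta>hat \<bullet> (\<Sigma> *v \<beta>hat))"
    have D: "distributed M lborel (\<lambda>\<omega>. \<beta>hat \<bullet> X \<omega>) (normal_density 0 \<sigma>)"
      using G False unfolding gaussian_vec_def \<sigma>_def by blast
    have "integrable lborel (\<lambda>x. normal_density 0 \<sigma> x * (\<lambda>x. x\<^sup>2) x)"
    proof -
      have "0 < \<sigma>" unfolding \<sigma>_def using assms(3) False by simp
      then show ?thesis using integrable_normal_moment[where \<mu>=0 and \<sigma>=\<sigma> and k=2] by simp
    qed
    then have "integrable M (\<lambda>\<omega>. (\<lambda>x. x\<^sup>2) (\<beta>hat \<bullet> X \<omega>))"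
      using distributed_integrable[OF D, of "\<lambda>x. x\<^sup>2"] by simp
    then show ?thesis unfolding Z_def by (simp add: inner_commute)
  qed
  have iZ: "integrable M Z" using M.square_integrable_imp_integrable[OF mZ] iZ2 by simp
  define N where "N = (\<Sum>s'\<in>UNIV. n s')"
  have "n undefined \<le> N" unfolding N_def by (rule member_le_sum) simp_all
  then have Npos: "0 < N" using npos by (metis less_le_trans)
  have w0: "\<forall>s. 0 \<le> wt n s" unfolding wt_def by (intro allI divide_nonneg_nonneg) (simp_all add: sum_nonneg)
  have sw: "(\<Sum>s\<in>UNIV. wt n s) = 1"
  proof -
    have "(\<Sum>s\<in>UNIV. wt n s) = real N / real N"
      unfolding wt_def N_def by (simp add: sum_divide_distrib[symmetric])
    then show ?thesis using Npos by simp
  qed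
  define bb where "bb = (\<Sum>s'\<in>UNIV. wt n s' * bhat s')"
  define c where "c = (\<lambda>s. sqrt \<tau> * bhat s + (1 - sqrt \<tau>) * bb)"
  have fe: "(\<lambda>s. distr M borel (\<lambda>\<omega>. f_tau n \<beta>hat bhat \<tau> (X \<omega>) s)) = (\<lambda>s. distr M borel (\<lambda>\<omega>. Z \<omega> + c s))"
    unfolding f_tau_def Z_def c_def bb_def by (simp only: add.assoc)
  have cb: "(\<Sum>s'\<in>UNIV. wt n s' * c s') = bb"
  proof -
    have "(\<Sum>s'\<in>UNIV. wt n s' * c s') = (\<Sum>s'\<in>UNIV. sqrt \<tau> * (wt n s' * bhat s') + ((1 - sqrt \<tau>) * bb) * wt n s')"
      unfolding c_def by (rule sum.cong) (simp_all add: algebra_simps)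
    also have "\<dots> = sqrt \<tau> * bb + ((1 - sqrt \<tau>) * bb) * 1"
      by (simp add: sum.distrib sum_distrib_left[symmetric] sum_distrib_right[symmetric] sw bb_def)
    also have "\<dots> = bb" by (simp add: algebra_simps)
    finally show ?thesis .
  qed
  have fin: "(\<Sum>s\<in>UNIV. wt n s * (c s - bb)\<^sup>2) = \<tau> * (\<Sum>s\<in>UNIV. wt n s * (bhat s - bb)\<^sup>2)"
  proof -
    have "(\<Sum>s\<in>UNIV. wt n s * (c s - bb)\<^sup>2) = (\<Sum>s\<in>UNIV. \<tau> * (wt n s * (bhat s - bb)\<^sup>2))"
    proof (rule sum.cong)
      fix s
      have "c s - bb = sqrt \<tau> * (bhat s - bb)" unfolding c_def by (simp add: algebra_simps)
      then have "(c s - bb)\<^sup>2 = \<tau> * (bhat s - bb)\<^sup>2" using t0 by (simp add: power_mult_distrib)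
      then show "wt n s * (c s - bb)\<^sup>2 = \<tau> * (wt n s * (bhat s - bb)\<^sup>2)" by simp
    qed simp
    then show ?thesis by (simp add: sum_distrib_left)
  qed
  have "unfairness (wt n) (\<lambda>s. distr M borel (\<lambda>\<omega>. f_tau n \<beta>hat bhat \<tau> (X \<omega>) s))
     = ennreal (\<Sum>s\<in>UNIV. wt n s * (c s - (\<Sum>s'\<in>UNIV. wt n s' * c s'))\<^sup>2)"
    unfolding fe by (rule translate_unfair[OF PM mZ iZ iZ2 w0 sw])
  also have "\<dots> = ennreal (\<tau> * (\<Sum>s\<in>UNIV. wt n s * (bhat s - bb)\<^sup>2))"
    by (simp only: cb fin)
  finally show ?thesis unfolding bb_def .
qed

end
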